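(* Let $\mathbb{F}$ be a field, $p,q\in\mathbb{F}[t]$ monic of degree $2$, and $\mathcal{W}_{p,q}=\mathbb{F}\langle a,b\rangle/(p(a),q(b))$. A nonzero element $x\in\mathcal{W}_{p,q}$ is a zero divisor (i.e. there is $y\neq0$ with $xy=0$ or $yx=0$) if and only if $N(x)=0$, where $N(x)=xx^\star$.
   Context: $\mathcal{W}_{p,q}$ is the free associative unital $\mathbb{F}$-algebra on two generators modulo the ideal generated by $p(a),q(b)$. For a $2$-dimensional algebra set $x^\star=\mathrm{tr}(x)-x$; the adjunction $x\mapsto x^\star$ of $\mathcal{W}_{p,q}$ is the unique $\mathbb{F}$-linear anti-automorphism agreeing with this on $\mathbb{F}[a]$ and $\mathbb{F}[b]$ (so $a^\star=\mathrm{tr}(p)-a$, $b^\star=\mathrm{tr}(q)-b$, where $\mathrm{tr}(p)$ is minus the coefficient of $t$). The norm $N(x)=xx^\star=x^\star x$ lies in the center of $\mathcal{W}_{p,q}$. *)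

theory Defs
  imports "HOL-Computational_Algebra.Polynomial"
begin

text \<open>The free associative unital algebra F<a,b> is modelled concretely as
finitely supported functions from words over the alphabet {a,b} to F.
Letter True stands for the generator a, letter False for b.\<close>

type_synonym 'k falg = "bool list \<Rightarrow> 'k"

definition FA :: "'k::field falg set" where
  "FA = {f. finite {w. f w \<noteq> 0}}"

definition fa_add :: "'k::field falg \<Rightarrow> 'k falg \<Rightarrow> 'k falg" where
  "fa_add f g = (\<lambda>w. f w + g w)"

definition fa_scale :: "'k::field \<Rightarrow> 'k falg \<Rightarrow> 'k falg" where
  "fa_scale c f = (\<lambda>w. c * f w)"

definition fa_mult :: "'k::field falg \<Rightarrow> 'k falg \<Rightarrow> 'k falg" where
  "fa_mult f g = (\<lambda>w. \<Sum>i\<le>length w. f (take i w) * g (drop i w))"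

definition fa_word :: "bool list \<Rightarrow> 'k::field falg" where
  "fa_word v = (\<lambda>w. if w = v then 1 else 0)"

definition fa_one :: "'k::field falg" where
  "fa_one = fa_word []"

definition fa_poly_gen :: "'k::field poly \<Rightarrow> bool \<Rightarrow> 'k falg" where
  "fa_poly_gen p c = (\<lambda>w. if w = replicate (length w) c then coeff p (length w) else 0)"

inductive_set W_ideal :: "'k::field poly \<Rightarrow> 'k poly \<Rightarrow> 'k falg set"
  for p q where
  gen_p: "fa_poly_gen p True \<in> W_ideal p q"
| gen_q: "fa_poly_gen q False \<in> W_ideal p q"
| add: "f \<in> W_ideal p q \<Longrightarrow> g \<in> W_ideal p q \<Longrightarrow> fa_add f g \<in> W_ideal p q"
| mult: "f \<in> W_ideal p q \<Longrightarrow> g \<in> FA \<Longrightarrow> h \<in> FA \<Longrightarrow> fa_mult g (fa_mult f h) \<in> W_ideal p q"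

definition ptr :: "'k::field poly \<Rightarrow> 'k" where
  "ptr p = - coeff p 1"

text \<open>Adjunction: the linear anti-homomorphism with a* = tr(p) - a, b* = tr(q) - b,
defined on F<a,b>; it descends to the quotient W_{p,q}.\<close>
definition gen_star :: "'k::field poly \<Rightarrow> 'k poly \<Rightarrow> bool \<Rightarrow> 'k falg" where
  "gen_star p q c = (\<lambda>w. (if c then ptr p else ptr q) * fa_one w - fa_word [c] w)"

fun word_star :: "'k::field poly \<Rightarrow> 'k poly \<Rightarrow> bool list \<Rightarrow> 'k falg" where
  "word_star p q [] = fa_one"
| "word_star p q (c # w) = fa_mult (word_star p q w) (gen_star p q c)"

definition fa_star :: "'k::field poly \<Rightarrow> 'k poly \<Rightarrow> 'k falg \<Rightarrow> 'k falg" where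
  "fa_star p q f = (\<lambda>u. \<Sum>w\<in>{w. f w \<noteq> 0}. f w * word_star p q w u)"

definition W_norm :: "'k::field poly \<Rightarrow> 'k poly \<Rightarrow> 'k falg \<Rightarrow> 'k falg" where
  "W_norm p q x = fa_mult x (fa_star p q x)"

end

theory Submission
  imports Defs
begin

datatype 'a m2 = M2 (m11: 'a) (m12: 'a) (m21: 'a) (m22: 'a)

instantiation m2 :: (comm_ring_1) ring_1
begin
definition "0 = M2 0 0 0 0"
definition "1 = M2 1 0 0 1"
definition "A + B = M2 (m11 A + m11 B) (m12 A + m12 B) (m21 A + m21 B) (m22 A + m22 B)"
definition "A - B = M2 (m11 A - m11 B) (m12 A - m12 B) (m21 A - m21 B) (m22 A - m22 B)"
definition "- A = M2 (- m11 A) (- m12 A) (- m21 A) (- m22 A)"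
definition "A * B = M2 (m11 A * m11 B + m12 A * m21 B) (m11 A * m12 B + m12 A * m22 B)
   (m21 A * m11 B + m22 A * m21 B) (m21 A * m12 B + m22 A * m22 B)"
instance
  by standard (auto simp: zero_m2_def one_m2_def plus_m2_def minus_m2_def uminus_m2_def times_m2_def
     algebra_simps intro!: m2.expand)
end

lemma m2_sel_simps[simp]:
  "m11 (0::'a::comm_ring_1 m2) = 0" "m12 (0::'a::comm_ring_1 m2) = 0" "m21 (0::'a::comm_ring_1 m2) = 0" "m22 (0::'a::comm_ring_1 m2) = 0"
  "m11 (1::'a::comm_ring_1 m2) = 1" "m12 (1::'a::comm_ring_1 m2) = 0" "m21 (1::'a::comm_ring_1 m2) = 0" "m22 (1::'a::comm_ring_1 m2) = 1"
  "m11 (A + B) = m11 A + m11 B" "m12 (A + B) = m12 A + m12 B" "m21 (A + B) = m21 A + m21 B" "m22 (A + B) = m22 A + m22 B"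
  "m11 (A - B) = m11 A - m11 B" "m12 (A - B) = m12 A - m12 B" "m21 (A - B) = m21 A - m21 B" "m22 (A - B) = m22 A - m22 B"
  "m11 (- A) = - m11 A" "m12 (- A) = - m12 A" "m21 (- A) = - m21 A" "m22 (- A) = - m22 A"
  "m11 (A * B) = m11 A * m11 B + m12 A * m21 B" "m12 (A * B) = m11 A * m12 B + m12 A * m22 B"
  "m21 (A * B) = m21 A * m11 B + m22 A * m21 B" "m22 (A * B) = m21 A * m12 B + m22 A * m22 B"
  by (simp_all add: zero_m2_def one_m2_def plus_m2_def minus_m2_def uminus_m2_def times_m2_def)

lemma m2_eq_iff: "(A::'a m2) = B \<longleftrightarrow> m11 A = m11 B \<and> m12 A = m12 B \<and> m21 A = m21 B \<and> m22 A = m22 B"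
  by (auto intro: m2.expand)

lemma m2_sum_sel:
  "m11 (sum f S) = (\<Sum>x\<in>S. m11 (f x))" "m12 (sum f S) = (\<Sum>x\<in>S. m12 (f x))"
  "m21 (sum f S) = (\<Sum>x\<in>S. m21 (f x))" "m22 (sum f S) = (\<Sum>x\<in>S. m22 (f x))"
  for f :: "'b \<Rightarrow> 'a::comm_ring_1 m2"
  by (induct S rule: infinite_finite_induct, auto)+

definition cm :: "'a::comm_ring_1 \<Rightarrow> 'a m2" where "cm c = M2 c 0 0 c"

lemma cm_simps[simp]: "cm (a + b) = cm a + cm b" "cm (a * b) = cm a * cm b" "cm 0 = 0" "cm 1 = 1"
  "cm (- a) = - cm a"
  by (simp_all add: cm_def m2_eq_iff)

lemma cm_comm: "cm c * M = M * cm c"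
  by (simp add: cm_def m2_eq_iff algebra_simps)

definition adj :: "'a::comm_ring_1 m2 \<Rightarrow> 'a m2" where "adj M = M2 (m22 M) (- m12 M) (- m21 M) (m11 M)"
definition det2 :: "'a::comm_ring_1 m2 \<Rightarrow> 'a" where "det2 M = m11 M * m22 M - m12 M * m21 M"

lemma adj_add: "adj (A + B) = adj A + adj B" by (simp add: adj_def m2_eq_iff)
lemma adj_mult: "adj (A * B) = adj B * adj A" by (simp add: adj_def m2_eq_iff algebra_simps)
lemma adj_cm: "adj (cm c * A) = cm c * adj A" by (simp add: adj_def cm_def m2_eq_iff)
lemma adj_zero[simp]: "adj 0 = 0" by (simp add: adj_def m2_eq_iff)
lemma adj_sum: "adj (sum f S) = (\<Sum>x\<in>S. adj (f x))"
  by (induct S rule: infinite_finite_induct, auto simp: adj_add)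
lemma adj_0_iff: "adj A = 0 \<longleftrightarrow> A = 0" by (auto simp add: adj_def m2_eq_iff)
lemma mult_adj: "A * adj A = cm (det2 A)" "adj A * A = cm (det2 A)"
  by (simp_all add: adj_def cm_def det2_def m2_eq_iff algebra_simps)

lemma det_zero_right:
  fixes X Y :: "'a::idom m2"
  assumes "X * Y = 0" "Y \<noteq> 0" shows "det2 X = 0"
proof -
  have "adj X * (X * Y) = 0" using assms by simp
  hence "cm (det2 X) * Y = 0" by (simp add: mult.assoc[symmetric] mult_adj)
  thus ?thesis using assms(2) by (auto simp: cm_def m2_eq_iff)
qed

lemma det_zero_left:
  fixes X Y :: "'a::idom m2"
  assumes "Y * X = 0" "Y \<noteq> 0" shows "det2 X = 0"
proof -
  have "(Y * X) * adj X = 0" using assms by simp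
  hence "Y * cm (det2 X) = 0" by (simp add: mult.assoc mult_adj)
  thus ?thesis using assms(2) by (auto simp: cm_def m2_eq_iff)
qed


abbreviation supp :: "'k::field falg \<Rightarrow> bool list set" where "supp f \<equiv> {w. f w \<noteq> 0}"

lemma FA_iff: "f \<in> FA \<longleftrightarrow> finite (supp f)" by (simp add: FA_def)

lemma fa_mult_word_left:
  "fa_mult (fa_word u) g = (\<lambda>w. if take (length u) w = u then g (drop (length u) w) else 0)"
proof
  fix w
  define Q where "Q = (take (length u) w = u)"
  have eq: "\<And>i. i \<in> {..length w} \<Longrightarrow> (take i w = u) = (i = length u \<and> Q)"
    unfolding Q_def by (auto simp: min_def)
  have "fa_mult (fa_word u) g w = (\<Sum>i\<le>length w. if i = length u \<and> take (length u) w = u then g (drop i w) else 0)"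
    unfolding fa_mult_def fa_word_def by (rule sum.cong) (simp_all only: eq Q_def, auto)
  also have "\<dots> = (if take (length u) w = u then g (drop (length u) w) else 0)"
  proof (cases "take (length u) w = u")
    case True
    hence "length (take (length u) w) = length u" by simp
    hence "length u \<le> length w" by (simp add: min_def split: if_splits)
    then show ?thesis using True by (simp add: sum.delta')
  qed simp
  finally show "fa_mult (fa_word u) g w = (if take (length u) w = u then g (drop (length u) w) else 0)" .
qed

lemma fa_mult_word_right:
  "fa_mult g (fa_word v) = (\<lambda>w. if length v \<le> length w \<and> drop (length w - length v) w = v
      then g (take (length w - length v) w) else 0)"
proof
  fix w
  define Q where "Q = (length v \<le> length w \<and> drop (length w - length v) w = v)"
  have eq: "\<And>i. i \<in> {..length w} \<Longrightarrow> (drop i w = v) = (i = length w - length v \<and> Q)"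
    unfolding Q_def by auto
  have "fa_mult g (fa_word v) w = (\<Sum>i\<le>length w. if i = length w - length v \<and> Q then g (take i w) else 0)"
    unfolding fa_mult_def fa_word_def by (rule sum.cong) (simp_all only: eq, auto)
  also have "\<dots> = (if Q then g (take (length w - length v) w) else 0)"
    by (cases Q) (simp_all add: sum.delta')
  finally show "fa_mult g (fa_word v) w = (if length v \<le> length w \<and> drop (length w - length v) w = v then g (take (length w - length v) w) else 0)"
    unfolding Q_def .
qed

lemma fa_sandwich_app: "fa_mult (fa_word u) (fa_mult P (fa_word v)) (u @ m @ v) = P m"
  by (simp add: fa_mult_word_left fa_mult_word_right)

lemma fa_sandwich_supp:
  assumes "fa_mult (fa_word u) (fa_mult P (fa_word v)) w \<noteq> 0"
  shows "\<exists>m. w = u @ m @ v"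
proof -
  let ?r = "drop (length u) w"
  from assms have 1: "take (length u) w = u" and 2: "length v \<le> length ?r" and 3: "drop (length ?r - length v) ?r = v"
    by (auto simp: fa_mult_word_left fa_mult_word_right split: if_splits)
  have "w = u @ ?r" using 1 by (metis append_take_drop_id)
  moreover have "?r = take (length ?r - length v) ?r @ v" using 3 by (metis append_take_drop_id)
  ultimately show ?thesis by metis
qed

lemma FA_add: "f \<in> FA \<Longrightarrow> g \<in> FA \<Longrightarrow> fa_add f g \<in> FA"
proof -
  assume a: "f \<in> FA" "g \<in> FA"
  have "supp (fa_add f g) \<subseteq> supp f \<union> supp g" by (auto simp: fa_add_def)
  thus ?thesis using a by (auto simp: FA_iff intro: finite_subset)
qed

lemma FA_scale: "f \<in> FA \<Longrightarrow> fa_scale c f \<in> FA"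
proof -
  assume a: "f \<in> FA"
  have "supp (fa_scale c f) \<subseteq> supp f" by (auto simp: fa_scale_def)
  thus ?thesis using a by (auto simp: FA_iff intro: finite_subset)
qed

lemma FA_word: "fa_word v \<in> (FA :: 'k::field falg set)"
proof -
  have "supp (fa_word v :: 'k falg) \<subseteq> {v}" by (auto simp: fa_word_def)
  thus ?thesis by (auto simp: FA_iff intro: finite_subset)
qed

lemma FA_one: "fa_one \<in> FA" by (simp add: fa_one_def FA_word)

lemma conv:
  assumes "finite S" "finite T" "supp f \<subseteq> S" "supp g \<subseteq> T"
  shows "fa_mult f g w = (\<Sum>x\<in>{x\<in>S \<times> T. fst x @ snd x = w}. f (fst x) * g (snd x))"
proof -
  let ?h = "\<lambda>x. f (fst x) * g (snd x)"
  let ?P = "{x. fst x @ snd x = w}"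
  have inj: "inj_on (\<lambda>i. (take i w, drop i w)) {..length w}"
    by (rule inj_onI) (metis atMost_iff length_take min.absorb2 prod.inject)
  have img: "(\<lambda>i. (take i w, drop i w)) ` {..length w} = ?P"
  proof
    show "?P \<subseteq> (\<lambda>i. (take i w, drop i w)) ` {..length w}"
    proof
      fix x assume "x \<in> ?P"
      then obtain u v where x: "x = (u, v)" "u @ v = w" by (cases x) auto
      hence "x = (take (length u) w, drop (length u) w)" "length u \<in> {..length w}" by auto
      thus "x \<in> (\<lambda>i. (take i w, drop i w)) ` {..length w}" by blast
    qed
  qed auto
  have "fa_mult f g w = (\<Sum>i\<le>length w. ?h (take i w, drop i w))" by (simp add: fa_mult_def)
  also have "\<dots> = sum ?h ?P"
    using sum.reindex[OF inj, of ?h] img by simp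
  also have "\<dots> = sum ?h (?P \<inter> (S \<times> T))"
  proof (rule sum.mono_neutral_right)
    show "finite ?P" using img by (metis finite_atMost finite_imageI)
    show "?P \<inter> (S \<times> T) \<subseteq> ?P" by blast
    show "\<forall>x\<in>?P - ?P \<inter> (S \<times> T). ?h x = 0"
    proof
      fix x assume "x \<in> ?P - ?P \<inter> (S \<times> T)"
      hence "fst x \<notin> S \<or> snd x \<notin> T" by (cases x) auto
      thus "?h x = 0" using assms(3,4) by auto
    qed
  qed
  also have "?P \<inter> (S \<times> T) = {x\<in>S \<times> T. fst x @ snd x = w}" by auto
  finally show ?thesis .
qed

lemma FA_mult:
  assumes "f \<in> FA" "g \<in> FA" shows "fa_mult f g \<in> FA"
proof -
  have "supp (fa_mult f g) \<subseteq> (\<lambda>x. fst x @ snd x) ` (supp f \<times> supp g)"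
  proof
    fix w assume "w \<in> supp (fa_mult f g)"
    hence "(\<Sum>x\<in>{x\<in>supp f \<times> supp g. fst x @ snd x = w}. f (fst x) * g (snd x)) \<noteq> 0"
      using conv[of "supp f" "supp g" f g w] assms by (auto simp: FA_iff)
    then obtain x where "x \<in> {x\<in>supp f \<times> supp g. fst x @ snd x = w}"
      by (meson sum.not_neutral_contains_not_neutral)
    thus "w \<in> (\<lambda>x. fst x @ snd x) ` (supp f \<times> supp g)" by force
  qed
  thus ?thesis using assms by (auto simp: FA_iff intro: finite_subset)
qed


definition sc :: "'k::field \<Rightarrow> 'k poly m2" where "sc c = cm [:c:]"

lemma sc_simps[simp]: "sc (a + b) = sc a + sc b" "sc (a * b) = sc a * sc b" "sc 0 = 0" "sc 1 = 1"
  "sc (- a) = - sc a"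
  by (simp_all add: sc_def cm_def m2_eq_iff one_pCons)



lemma sc_comm: "sc c * M = M * sc c" by (simp add: sc_def cm_comm)

lemma sc_helper: "sc a * sc b * (P * Q) = sc a * P * (sc b * Q)"
  by (metis mult.assoc sc_comm)

lemma sc_sum: "sc (sum f S) = (\<Sum>x\<in>S. sc (f x))"
  by (induct S rule: infinite_finite_induct) auto

fun phiw :: "'k::field poly m2 \<Rightarrow> 'k poly m2 \<Rightarrow> bool list \<Rightarrow> 'k poly m2" where
  "phiw A B [] = 1"
| "phiw A B (c # w) = (if c then A else B) * phiw A B w"

lemma phiw_append: "phiw A B (u @ v) = phiw A B u * phiw A B v"
  by (induct u) (auto simp: mult.assoc)

definition phi :: "'k::field poly m2 \<Rightarrow> 'k poly m2 \<Rightarrow> 'k falg \<Rightarrow> 'k poly m2" where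
  "phi A B f = (\<Sum>w\<in>supp f. sc (f w) * phiw A B w)"

lemma phi_sum:
  assumes "finite S" "supp f \<subseteq> S"
  shows "phi A B f = (\<Sum>w\<in>S. sc (f w) * phiw A B w)"
  unfolding phi_def by (rule sum.mono_neutral_left) (use assms in auto)

lemma phi_add:
  assumes "f \<in> FA" "g \<in> FA" shows "phi A B (fa_add f g) = phi A B f + phi A B g"
proof -
  let ?S = "supp f \<union> supp g"
  have fin: "finite ?S" using assms by (auto simp: FA_iff)
  have "phi A B (fa_add f g) = (\<Sum>w\<in>?S. sc (fa_add f g w) * phiw A B w)"
    by (rule phi_sum[OF fin]) (auto simp: fa_add_def)
  also have "\<dots> = (\<Sum>w\<in>?S. sc (f w) * phiw A B w) + (\<Sum>w\<in>?S. sc (g w) * phiw A B w)"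
    by (simp add: fa_add_def distrib_right sum.distrib)
  also have "\<dots> = phi A B f + phi A B g"
    using phi_sum[OF fin, of f] phi_sum[OF fin, of g] by auto
  finally show ?thesis .
qed

lemma phi_scale:
  assumes "f \<in> FA" shows "phi A B (fa_scale c f) = sc c * phi A B f"
proof -
  have fin: "finite (supp f)" using assms by (auto simp: FA_iff)
  have "phi A B (fa_scale c f) = (\<Sum>w\<in>supp f. sc (fa_scale c f w) * phiw A B w)"
    by (rule phi_sum[OF fin]) (auto simp: fa_scale_def)
  also have "\<dots> = sc c * phi A B f"
    by (simp add: fa_scale_def phi_def sum_distrib_left mult.assoc)
  finally show ?thesis .
qed

lemma phi_word: "phi A B (fa_word v) = phiw A B v"
  by (subst phi_sum[of "{v}"]) (auto simp: fa_word_def)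

lemma phi_zero: "phi A B (\<lambda>w. 0) = 0" by (simp add: phi_def)

lemma phi_mult:
  assumes "f \<in> FA" "g \<in> FA" shows "phi A B (fa_mult f g) = phi A B f * phi A B g"
proof -
  let ?S = "supp f" and ?T = "supp g"
  let ?U = "(\<lambda>x. fst x @ snd x) ` (?S \<times> ?T)"
  have fS: "finite ?S" and fT: "finite ?T" using assms by (auto simp: FA_iff)
  have fU: "finite ?U" using fS fT by auto
  have cv: "\<And>w. fa_mult f g w = (\<Sum>x\<in>{x\<in>?S \<times> ?T. fst x @ snd x = w}. f (fst x) * g (snd x))"
    by (rule conv[OF fS fT]) auto
  have sU: "supp (fa_mult f g) \<subseteq> ?U"
  proof
    fix w assume "w \<in> supp (fa_mult f g)"
    hence "(\<Sum>x\<in>{x\<in>?S \<times> ?T. fst x @ snd x = w}. f (fst x) * g (snd x)) \<noteq> 0" using cv by simp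
    then obtain x where "x \<in> {x\<in>?S \<times> ?T. fst x @ snd x = w}"
      by (meson sum.not_neutral_contains_not_neutral)
    thus "w \<in> ?U" by force
  qed
  let ?k = "\<lambda>x. sc (f (fst x) * g (snd x)) * phiw A B (fst x @ snd x)"
  have "phi A B (fa_mult f g) = (\<Sum>w\<in>?U. sc (fa_mult f g w) * phiw A B w)"
    by (rule phi_sum[OF fU sU])
  also have "\<dots> = (\<Sum>w\<in>?U. \<Sum>x\<in>{x\<in>?S \<times> ?T. fst x @ snd x = w}. ?k x)"
    by (rule sum.cong[OF refl]) (simp add: cv sc_sum sum_distrib_right)
  also have "\<dots> = (\<Sum>x\<in>?S \<times> ?T. ?k x)"
    by (rule sum.group) (use fS fT in auto)
  also have "\<dots> = (\<Sum>x\<in>?S \<times> ?T. (sc (f (fst x)) * phiw A B (fst x)) * (sc (g (snd x)) * phiw A B (snd x)))"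
    by (rule sum.cong[OF refl]) (simp add: phiw_append sc_helper)
  also have "\<dots> = (\<Sum>u\<in>?S. \<Sum>v\<in>?T. (sc (f u) * phiw A B u) * (sc (g v) * phiw A B v))"
    unfolding sum.cartesian_product by (simp add: split_def)
  also have "\<dots> = phi A B f * phi A B g"
    by (simp add: phi_def sum_product)
  finally show ?thesis .
qed

lemma lsum_FA_phi:
  assumes "finite S" "\<And>i. i \<in> S \<Longrightarrow> h i \<in> FA"
  shows "(\<lambda>u. \<Sum>i\<in>S. h i u) \<in> FA \<and> phi A B (\<lambda>u. \<Sum>i\<in>S. h i u) = (\<Sum>i\<in>S. phi A B (h i))"
  using assms
proof (induct S rule: finite_induct)
  case empty
  then show ?case by (simp add: phi_zero FA_iff)
next
  case (insert a F)
  have e: "(\<lambda>u. \<Sum>i\<in>insert a F. h i u) = fa_add (h a) (\<lambda>u. \<Sum>i\<in>F. h i u)"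
    using insert by (simp add: fa_add_def)
  show ?case unfolding e using insert by (simp add: FA_add phi_add)
qed


definition Amat :: "'k::field poly \<Rightarrow> 'k poly m2" where
  "Amat p = M2 0 [:- coeff p 0:] 1 [:- coeff p 1:]"
definition Bmat :: "'k::field poly \<Rightarrow> 'k poly m2" where
  "Bmat q = M2 [:0,1:] [:- coeff q 0, - coeff q 1, -1:] 1 [:- coeff q 1, -1:]"

abbreviation Gm :: "'k::field poly \<Rightarrow> 'k poly \<Rightarrow> bool \<Rightarrow> 'k poly m2" where
  "Gm p q c \<equiv> (if c then Amat p else Bmat q)"

lemma cayley_A: "sc (coeff p 0) + sc (coeff p 1) * Amat p + Amat p * Amat p = 0"
  by (simp add: sc_def cm_def Amat_def m2_eq_iff algebra_simps)

lemma cayley_B: "sc (coeff q 0) + sc (coeff q 1) * Bmat q + Bmat q * Bmat q = 0"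
  by (simp add: sc_def cm_def Bmat_def m2_eq_iff algebra_simps)

lemma adj_A: "adj (Amat p) = sc (ptr p) - Amat p"
  by (simp add: sc_def cm_def Amat_def adj_def ptr_def m2_eq_iff)

lemma adj_B: "adj (Bmat q) = sc (ptr q) - Bmat q"
  by (simp add: sc_def cm_def Bmat_def adj_def ptr_def m2_eq_iff)

lemma poly_gen_supp:
  assumes "degree P = 2"
  shows "supp (fa_poly_gen P c) \<subseteq> {[], [c], [c, c]}"
proof
  fix w assume "w \<in> supp (fa_poly_gen P c)"
  hence w: "w = replicate (length w) c" "coeff P (length w) \<noteq> 0"
    by (auto simp: fa_poly_gen_def split: if_splits)
  hence "length w \<le> 2" using assms le_degree by fastforce
  hence "length w = 0 \<or> length w = 1 \<or> length w = 2" by presburger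
  thus "w \<in> {[], [c], [c, c]}" using w(1)
    by (auto simp: numeral_2_eq_2)
qed

lemma FA_poly_gen: "degree P = 2 \<Longrightarrow> fa_poly_gen P c \<in> FA"
  using poly_gen_supp by (auto simp: FA_iff intro: finite_subset)

lemma phi_poly_gen:
  assumes "degree P = 2" "lead_coeff P = 1"
  shows "phi A B (fa_poly_gen P c) = sc (coeff P 0) + sc (coeff P 1) * (if c then A else B)
          + (if c then A else B) * (if c then A else B)"
proof -
  have "phi A B (fa_poly_gen P c) = (\<Sum>w\<in>{[], [c], [c, c]}. sc (fa_poly_gen P c w) * phiw A B w)"
    by (rule phi_sum) (use poly_gen_supp assms in auto)
  also have "\<dots> = sc (coeff P 0) + sc (coeff P 1) * (if c then A else B)
          + (if c then A else B) * (if c then A else B)"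
    using assms by (simp add: fa_poly_gen_def numeral_2_eq_2 add.assoc)
  finally show ?thesis .
qed

lemma fa_mult_one_right: "fa_mult f fa_one = f"
  by (simp add: fa_one_def fa_mult_word_right)

lemma fa_mult_one_left: "fa_mult fa_one f = f"
  by (simp add: fa_one_def fa_mult_word_left)

lemma fa_mult_scale_left: "fa_mult (fa_scale c f) g = fa_scale c (fa_mult f g)"
  by (simp add: fa_mult_def fa_scale_def sum_distrib_left mult.assoc)

lemma W_scale: "f \<in> W_ideal p q \<Longrightarrow> fa_scale c f \<in> W_ideal p q"
proof -
  assume "f \<in> W_ideal p q"
  hence "fa_mult (fa_scale c fa_one) (fa_mult f fa_one) \<in> W_ideal p q"
    by (rule W_ideal.mult) (simp_all add: FA_scale FA_one)
  thus ?thesis by (simp add: fa_mult_one_right fa_mult_scale_left fa_mult_one_left)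
qed

lemma W_zero: "(\<lambda>w. 0) \<in> W_ideal p q"
  using W_scale[OF W_ideal.gen_p, where c=0] by (simp add: fa_scale_def)

lemma W_sandwich: "fa_mult (fa_word u) (fa_mult (fa_poly_gen (if c then p else q) c) (fa_word v)) \<in> W_ideal p q"
  by (cases c) (auto intro!: W_ideal.mult W_ideal.gen_p W_ideal.gen_q FA_word)

locale pq =
  fixes p q :: "'k::field poly"
  assumes dp: "degree p = 2" and lp: "lead_coeff p = 1"
    and dq: "degree q = 2" and lq: "lead_coeff q = 1"
begin

abbreviation "Phi \<equiv> phi (Amat p) (Bmat q)"

lemma ideal_phi: "x \<in> W_ideal p q \<Longrightarrow> x \<in> FA \<and> Phi x = 0"
proof (induct rule: W_ideal.induct)
  case gen_p
  then show ?case using dp lp cayley_A[of p] by (simp add: FA_poly_gen phi_poly_gen)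
next
  case gen_q
  then show ?case using dq lq cayley_B[of q] by (simp add: FA_poly_gen phi_poly_gen)
next
  case (add f g)
  then show ?case by (simp add: FA_add phi_add)
next
  case (mult f g h)
  then show ?case by (simp add: FA_mult phi_mult)
qed

lemma gen_star_eq: "gen_star p q c = fa_add (fa_scale (if c then ptr p else ptr q) fa_one) (fa_scale (-1) (fa_word [c]))"
  by (auto simp: gen_star_def fa_add_def fa_scale_def)

lemma gen_star_phi: "gen_star p q c \<in> FA \<and> Phi (gen_star p q c) = adj (Gm p q c)"
  unfolding gen_star_eq
  by (simp add: FA_add FA_scale FA_one FA_word[of "[]"] FA_word phi_add phi_scale phi_word fa_one_def adj_A adj_B)

lemma word_star_phi: "word_star p q w \<in> FA \<and> Phi (word_star p q w) = adj (phiw (Amat p) (Bmat q) w)"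
proof (induct w)
  case Nil
  then show ?case by (simp add: FA_word fa_one_def phi_word adj_def m2_eq_iff)
next
  case (Cons c w)
  then show ?case using gen_star_phi[of c]
    by (simp add: FA_mult phi_mult adj_mult)
qed

lemma star_phi:
  assumes "x \<in> FA"
  shows "fa_star p q x \<in> FA \<and> Phi (fa_star p q x) = adj (Phi x)"
proof -
  have fin: "finite (supp x)" using assms by (simp add: FA_iff)
  have e: "fa_star p q x = (\<lambda>u. \<Sum>w\<in>supp x. fa_scale (x w) (word_star p q w) u)"
    by (simp add: fa_star_def fa_scale_def)
  have "(\<lambda>u. \<Sum>w\<in>supp x. fa_scale (x w) (word_star p q w) u) \<in> FA \<and>
        Phi (\<lambda>u. \<Sum>w\<in>supp x. fa_scale (x w) (word_star p q w) u) = (\<Sum>w\<in>supp x. Phi (fa_scale (x w) (word_star p q w)))"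
    by (rule lsum_FA_phi[OF fin]) (simp add: FA_scale word_star_phi)
  moreover have "(\<Sum>w\<in>supp x. Phi (fa_scale (x w) (word_star p q w))) = (\<Sum>w\<in>supp x. sc (x w) * adj (phiw (Amat p) (Bmat q) w))"
    by (rule sum.cong) (simp_all add: phi_scale word_star_phi)
  moreover have "\<dots> = adj (Phi x)" by (simp add: phi_def adj_sum sc_def adj_cm)
  ultimately show ?thesis using e by simp
qed

end


definition bd :: "nat \<Rightarrow> 'k::field poly m2 \<Rightarrow> bool" where
  "bd d M \<longleftrightarrow> degree (m11 M) \<le> d \<and> degree (m12 M) \<le> d \<and> degree (m21 M) \<le> d \<and> degree (m22 M) \<le> d"

definition tc :: "nat \<Rightarrow> 'k::field poly m2 \<Rightarrow> 'k m2" where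
  "tc d M = M2 (coeff (m11 M) d) (coeff (m12 M) d) (coeff (m21 M) d) (coeff (m22 M) d)"

lemma coeff_mult_bd:
  fixes a b :: "'k::field poly"
  assumes "degree a \<le> d" "degree b \<le> e"
  shows "coeff (a * b) (d + e) = coeff a d * coeff b e"
proof -
  have "coeff (a * b) (d + e) = (\<Sum>i\<le>d+e. coeff a i * coeff b (d + e - i))" by (simp add: coeff_mult)
  also have "\<dots> = (\<Sum>i\<le>d+e. if i = d then coeff a d * coeff b e else 0)"
  proof (rule sum.cong[OF refl])
    fix i assume "i \<in> {..d+e}"
    show "coeff a i * coeff b (d + e - i) = (if i = d then coeff a d * coeff b e else 0)"
    proof (cases "i = d")
      case False
      then consider "i < d" | "d < i" by linarith
      then show ?thesis
      proof cases
        case 1 hence "degree b < d + e - i" using assms by linarith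
        then show ?thesis using False by (simp add: coeff_eq_0)
      next
        case 2 hence "degree a < i" using assms by linarith
        then show ?thesis using False by (simp add: coeff_eq_0)
      qed
    qed simp
  qed
  also have "\<dots> = coeff a d * coeff b e" by simp
  finally show ?thesis .
qed

lemma degree_bd_aux:
  fixes a b c e :: "'k::field poly"
  assumes "degree a \<le> m" "degree b \<le> n" "degree c \<le> m" "degree e \<le> n"
  shows "degree (a * b + c * e) \<le> m + n"
proof -
  have "degree (a * b) \<le> m + n" using assms by (meson add_mono degree_mult_le order_trans)
  moreover have "degree (c * e) \<le> m + n" using assms by (meson add_mono degree_mult_le order_trans)
  ultimately show ?thesis by (meson degree_add_le)
qed

lemma bd_mult:
  assumes "bd m M" "bd n N"
  shows "bd (m + n) (M * N) \<and> tc (m + n) (M * N) = tc m M * tc n N"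
  using assms unfolding bd_def tc_def
  by (simp add: degree_bd_aux coeff_mult_bd m2_eq_iff)

lemma bd_one: "bd 0 1" "tc 0 1 = 1"
  by (simp_all add: bd_def tc_def m2_eq_iff)

lemma bd_pow:
  assumes "bd d X" shows "bd (j * d) (X ^ j) \<and> tc (j * d) (X ^ j) = (tc d X) ^ j"
proof (induct j)
  case 0 then show ?case by (simp add: bd_one)
next
  case (Suc j)
  then show ?case using bd_mult[OF assms, of "j * d" "X ^ j"] by (simp add: add.commute)
qed

lemma tc_above: "bd d M \<Longrightarrow> d < e \<Longrightarrow> tc e M = 0"
  by (simp add: bd_def tc_def m2_eq_iff coeff_eq_0)

lemma tc_add: "tc d (M + N) = tc d M + tc d N" by (simp add: tc_def m2_eq_iff)
lemma tc_zero: "tc d 0 = 0" by (simp add: tc_def m2_eq_iff)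
lemma tc_sc: "tc d (sc c * M) = cm c * tc d M" by (simp add: tc_def sc_def cm_def m2_eq_iff)
lemma tc_sum: "tc d (sum f S) = (\<Sum>x\<in>S. tc d (f x))"
  by (induct S rule: infinite_finite_induct) (auto simp: tc_add tc_zero)

fun alt :: "bool \<Rightarrow> nat \<Rightarrow> bool list" where
  "alt c 0 = []"
| "alt c (Suc k) = c # alt (\<not> c) k"

lemma alt_eq_iff: "alt c k = alt d l \<longleftrightarrow> k = l \<and> (k = 0 \<or> c = d)"
proof (induct k arbitrary: c d l)
  case 0 then show ?case by (cases l) auto
next
  case (Suc k) then show ?case by (cases l) auto
qed

lemma alt_SS: "alt c (Suc (Suc k)) = c # (\<not> c) # alt c k" by simp

definition nbw :: "bool list \<Rightarrow> nat" where "nbw w = length (filter Not w)"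

lemma nbw_alt:
  "nbw (alt c (2 * j)) = j" "nbw (alt True (2 * j + 1)) = j" "nbw (alt False (2 * j + 1)) = j + 1"
proof -
  have "\<forall>c. nbw (alt c (2 * j)) = j \<and> nbw (alt True (2 * j + 1)) = j \<and> nbw (alt False (2 * j + 1)) = j + 1"
  proof (induct j)
    case 0 then show ?case by (simp add: nbw_def)
  next
    case (Suc j)
    have e1: "2 * Suc j = Suc (Suc (2 * j))" and e2: "2 * Suc j + 1 = Suc (Suc (2 * j + 1))" by simp_all
    show ?case unfolding e1 e2 alt_SS using Suc by (auto simp: nbw_def)
  qed
  thus "nbw (alt c (2 * j)) = j" "nbw (alt True (2 * j + 1)) = j" "nbw (alt False (2 * j + 1)) = j + 1"
    by auto
qed

lemma phiw_alt:
  "phiw A B (alt c (2 * j)) = ((if c then A else B) * (if c then B else A)) ^ j"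
  "phiw A B (alt c (2 * j + 1)) = ((if c then A else B) * (if c then B else A)) ^ j * (if c then A else B)"
proof -
  have "phiw A B (alt c (2 * j)) = ((if c then A else B) * (if c then B else A)) ^ j \<and>
    phiw A B (alt c (2 * j + 1)) = ((if c then A else B) * (if c then B else A)) ^ j * (if c then A else B)"
  proof (induct j)
    case 0 then show ?case by simp
  next
    case (Suc j)
    have e1: "2 * Suc j = Suc (Suc (2 * j))" and e2: "2 * Suc j + 1 = Suc (Suc (2 * j + 1))" by simp_all
    show ?case unfolding e1 e2 alt_SS using Suc by (cases c) (auto simp: mult.assoc)
  qed
  thus "phiw A B (alt c (2 * j)) = ((if c then A else B) * (if c then B else A)) ^ j"
    "phiw A B (alt c (2 * j + 1)) = ((if c then A else B) * (if c then B else A)) ^ j * (if c then A else B)"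
    by auto
qed

context pq
begin

definition "A0 = M2 0 (- coeff p 0) 1 (- coeff p 1)"
definition "Bt = (M2 0 (-1) 0 0 :: 'k m2)"
definition "EA = (M2 0 0 0 (-1) :: 'k m2)"
definition "EB = M2 (-1) (coeff p 1) 0 0"

lemma bdA: "bd 0 (Amat p) \<and> tc 0 (Amat p) = A0"
  by (simp add: bd_def tc_def Amat_def A0_def m2_eq_iff)

lemma bdB: "bd 2 (Bmat q) \<and> tc 2 (Bmat q) = Bt"
  by (simp add: bd_def tc_def Bmat_def Bt_def m2_eq_iff numeral_2_eq_2)

lemma bdPA: "bd 2 (Amat p * Bmat q) \<and> tc 2 (Amat p * Bmat q) = EA"
proof -
  have h: "bd (0 + 2) (Amat p * Bmat q) \<and> tc (0 + 2) (Amat p * Bmat q) = tc 0 (Amat p) * tc 2 (Bmat q)"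
    by (rule bd_mult) (use bdA bdB in auto)
  have "tc 0 (Amat p) * tc 2 (Bmat q) = EA" using bdA bdB by (simp add: A0_def Bt_def EA_def m2_eq_iff)
  with h show ?thesis by (simp only: add_0)
qed

lemma bdPB: "bd 2 (Bmat q * Amat p) \<and> tc 2 (Bmat q * Amat p) = EB"
proof -
  have h: "bd (2 + 0) (Bmat q * Amat p) \<and> tc (2 + 0) (Bmat q * Amat p) = tc 2 (Bmat q) * tc 0 (Amat p)"
    by (rule bd_mult) (use bdA bdB in auto)
  have "tc 2 (Bmat q) * tc 0 (Amat p) = EB" using bdA bdB by (simp add: A0_def Bt_def EB_def m2_eq_iff)
  with h show ?thesis by (simp only: add_0_right)
qed

lemma alt_lead:
  "bd (2 * j) (phiw (Amat p) (Bmat q) (alt True (2 * j))) \<and> tc (2 * j) (phiw (Amat p) (Bmat q) (alt True (2 * j))) = EA ^ j"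
  "bd (2 * j) (phiw (Amat p) (Bmat q) (alt False (2 * j))) \<and> tc (2 * j) (phiw (Amat p) (Bmat q) (alt False (2 * j))) = EB ^ j"
  "bd (2 * j) (phiw (Amat p) (Bmat q) (alt True (2 * j + 1))) \<and> tc (2 * j) (phiw (Amat p) (Bmat q) (alt True (2 * j + 1))) = EA ^ j * A0"
  "bd (2 * j + 2) (phiw (Amat p) (Bmat q) (alt False (2 * j + 1))) \<and> tc (2 * j + 2) (phiw (Amat p) (Bmat q) (alt False (2 * j + 1))) = EB ^ j * Bt"
proof -
  have PA: "bd (2 * j) ((Amat p * Bmat q) ^ j) \<and> tc (2 * j) ((Amat p * Bmat q) ^ j) = EA ^ j"
    using bd_pow[of 2 "Amat p * Bmat q" j] bdPA by (simp add: mult.commute)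
  have PB: "bd (2 * j) ((Bmat q * Amat p) ^ j) \<and> tc (2 * j) ((Bmat q * Amat p) ^ j) = EB ^ j"
    using bd_pow[of 2 "Bmat q * Amat p" j] bdPB by (simp add: mult.commute)
  show "bd (2 * j) (phiw (Amat p) (Bmat q) (alt True (2 * j))) \<and> tc (2 * j) (phiw (Amat p) (Bmat q) (alt True (2 * j))) = EA ^ j"
    using PA by (simp add: phiw_alt)
  show "bd (2 * j) (phiw (Amat p) (Bmat q) (alt False (2 * j))) \<and> tc (2 * j) (phiw (Amat p) (Bmat q) (alt False (2 * j))) = EB ^ j"
    using PB by (simp add: phiw_alt)
  show "bd (2 * j) (phiw (Amat p) (Bmat q) (alt True (2 * j + 1))) \<and> tc (2 * j) (phiw (Amat p) (Bmat q) (alt True (2 * j + 1))) = EA ^ j * A0"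
  proof -
    have e: "phiw (Amat p) (Bmat q) (alt True (2 * j + 1)) = (Amat p * Bmat q) ^ j * Amat p"
      by (simp only: phiw_alt if_True)
    have h: "bd (2 * j + 0) ((Amat p * Bmat q) ^ j * Amat p) \<and> tc (2 * j + 0) ((Amat p * Bmat q) ^ j * Amat p)
       = tc (2 * j) ((Amat p * Bmat q) ^ j) * tc 0 (Amat p)"
      by (rule bd_mult) (use PA bdA in auto)
    have T: "tc (2 * j) ((Amat p * Bmat q) ^ j) = EA ^ j" "tc 0 (Amat p) = A0" using PA bdA by auto
    show ?thesis using h unfolding e T add_0_right .
  qed
  show "bd (2 * j + 2) (phiw (Amat p) (Bmat q) (alt False (2 * j + 1))) \<and> tc (2 * j + 2) (phiw (Amat p) (Bmat q) (alt False (2 * j + 1))) = EB ^ j * Bt"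
  proof -
    have e: "phiw (Amat p) (Bmat q) (alt False (2 * j + 1)) = (Bmat q * Amat p) ^ j * Bmat q"
      by (simp only: phiw_alt if_False)
    have h: "bd (2 * j + 2) ((Bmat q * Amat p) ^ j * Bmat q) \<and> tc (2 * j + 2) ((Bmat q * Amat p) ^ j * Bmat q)
       = tc (2 * j) ((Bmat q * Amat p) ^ j) * tc 2 (Bmat q)"
      by (rule bd_mult) (use PB bdB in auto)
    have T: "tc (2 * j) ((Bmat q * Amat p) ^ j) = EB ^ j" "tc 2 (Bmat q) = Bt" using PB bdB by auto
    show ?thesis using h unfolding e T .
  qed
qed

lemma alt_cases: fixes k :: nat obtains j where "k = 2 * j" | j where "k = 2 * j + 1"
proof -
  have "k = 2 * (k div 2) \<or> k = 2 * (k div 2) + 1" by presburger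
  thus ?thesis using that by blast
qed

end


definition Tset :: "nat \<Rightarrow> bool list set" where
  "Tset M = (case M of 0 \<Rightarrow> {[], [True]}
     | Suc m \<Rightarrow> {alt False (2*m+1), alt True (2*m+2), alt False (2*m+2), alt True (2*m+3)})"

context pq
begin

lemma nf_bd: "w = alt c k \<Longrightarrow> bd (2 * nbw w) (phiw (Amat p) (Bmat q) w)"
proof (cases k rule: alt_cases)
  case (1 j)
  assume w: "w = alt c k"
  show ?thesis using alt_lead(1,2)[of j] nbw_alt(1)[of c j] unfolding w 1 by (cases c) auto
next
  case (2 j)
  assume w: "w = alt c k"
  show ?thesis
  proof (cases c)
    case True
    then show ?thesis using alt_lead(3)[of j] nbw_alt(2)[of j] unfolding w 2 by auto
  next
    case False
    have "2 * (j + 1) = 2 * j + 2" by simp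
    then show ?thesis using alt_lead(4)[of j] nbw_alt(3)[of j] False unfolding w 2 by auto
  qed
qed

lemma nf_T: "w = alt c k \<Longrightarrow> w \<in> Tset (nbw w)"
proof (cases k rule: alt_cases)
  case (1 j)
  assume w: "w = alt c k"
  have nb: "nbw w = j" using nbw_alt(1)[of c j] w 1 by simp
  show ?thesis
  proof (cases j)
    case 0 then show ?thesis using nb w 1 by (simp add: Tset_def)
  next
    case (Suc m)
    have "k = 2 * m + 2" using 1 Suc by simp
    then show ?thesis using nb w Suc by (cases c) (auto simp: Tset_def)
  qed
next
  case (2 j)
  assume w: "w = alt c k"
  show ?thesis
  proof (cases c)
    case True
    have nb: "nbw w = j" using nbw_alt(2)[of j] w 2 True by simp
    show ?thesis
    proof (cases j)
      case 0 then show ?thesis using nb w 2 True by (simp add: Tset_def)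
    next
      case (Suc m)
      have "k = 2 * m + 3" using 2 Suc by simp
      then show ?thesis using nb w Suc True by (auto simp: Tset_def)
    qed
  next
    case False
    have nb: "nbw w = Suc j" using nbw_alt(3)[of j] w 2 False by simp
    then show ?thesis using w 2 False by (auto simp: Tset_def)
  qed
qed

lemma EA_pow: "EA ^ Suc m = M2 0 0 0 ((-1) ^ Suc m)"
  by (induct m) (auto simp: EA_def m2_eq_iff)

lemma EB_pow: "EB ^ Suc m = M2 ((-1) ^ Suc m) (- ((-1) ^ Suc m) * coeff p 1) 0 0"
  by (induct m) (auto simp: EB_def m2_eq_iff)

lemma EB_pow_Bt: "EB ^ m * Bt = M2 0 ((-1) ^ Suc m) 0 0"
  by (induct m) (auto simp: EB_def Bt_def m2_eq_iff mult.assoc)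

lemma T_tc_Suc:
  "tc (2 * Suc m) (phiw (Amat p) (Bmat q) (alt False (2*m+1))) = M2 0 ((-1) ^ Suc m) 0 0"
  "tc (2 * Suc m) (phiw (Amat p) (Bmat q) (alt True (2*m+2))) = M2 0 0 0 ((-1) ^ Suc m)"
  "tc (2 * Suc m) (phiw (Amat p) (Bmat q) (alt False (2*m+2))) = M2 ((-1) ^ Suc m) (- ((-1) ^ Suc m) * coeff p 1) 0 0"
  "tc (2 * Suc m) (phiw (Amat p) (Bmat q) (alt True (2*m+3))) = M2 0 0 ((-1) ^ Suc m) (- ((-1) ^ Suc m) * coeff p 1)"
proof -
  have e1: "2 * Suc m = 2 * m + 2" and e2: "2*m+2 = 2 * Suc m" and e3: "2*m+3 = 2 * Suc m + 1" by simp_all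
  show "tc (2 * Suc m) (phiw (Amat p) (Bmat q) (alt False (2*m+1))) = M2 0 ((-1) ^ Suc m) 0 0"
    using alt_lead(4)[of m] EB_pow_Bt[of m] unfolding e1 by simp
  show "tc (2 * Suc m) (phiw (Amat p) (Bmat q) (alt True (2*m+2))) = M2 0 0 0 ((-1) ^ Suc m)"
    using alt_lead(1)[of "Suc m"] EA_pow[of m] unfolding e2 by simp
  show "tc (2 * Suc m) (phiw (Amat p) (Bmat q) (alt False (2*m+2))) = M2 ((-1) ^ Suc m) (- ((-1) ^ Suc m) * coeff p 1) 0 0"
    using alt_lead(2)[of "Suc m"] EB_pow[of m] unfolding e2 by simp
  show "tc (2 * Suc m) (phiw (Amat p) (Bmat q) (alt True (2*m+3))) = M2 0 0 ((-1) ^ Suc m) (- ((-1) ^ Suc m) * coeff p 1)"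
    using alt_lead(3)[of "Suc m"] EA_pow[of m] unfolding e3 by (simp add: A0_def m2_eq_iff)
qed

lemma indep:
  assumes "f \<in> FA" "\<And>w. f w \<noteq> 0 \<Longrightarrow> \<exists>c k. w = alt c k" "Phi f = 0"
  shows "f w0 = 0"
proof (rule ccontr)
  assume nz: "f w0 \<noteq> 0"
  let ?S = "supp f"
  have fS: "finite ?S" using assms by (simp add: FA_iff)
  have neS: "?S \<noteq> {}" using nz by auto
  define M where "M = Max (nbw ` ?S)"
  let ?T = "Tset M"
  define g where "g w = cm (f w) * tc (2 * M) (phiw (Amat p) (Bmat q) w)" for w
  have fT: "finite ?T" by (simp add: Tset_def split: nat.splits)
  have "tc (2 * M) (Phi f) = 0" using assms(3) by (simp add: tc_zero)
  hence s0: "sum g ?S = 0" by (simp add: phi_def tc_sum tc_sc g_def)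
  have eq1: "sum g ?S = sum g (?S \<union> ?T)"
    by (rule sum.mono_neutral_left) (use fS fT in \<open>auto simp: g_def\<close>)
  have eq2: "sum g ?T = sum g (?S \<union> ?T)"
  proof (rule sum.mono_neutral_left)
    show "\<forall>x\<in>?S \<union> ?T - ?T. g x = 0"
    proof
      fix x assume x: "x \<in> ?S \<union> ?T - ?T"
      then obtain c k where xa: "x = alt c k" using assms(2) by blast
      have "nbw x \<le> M" unfolding M_def using x fS by (auto intro: Max_ge)
      moreover have "nbw x \<noteq> M" using nf_T[OF xa] x by auto
      ultimately have "2 * nbw x < 2 * M" by simp
      thus "g x = 0" unfolding g_def using tc_above[OF nf_bd[OF xa]] by simp
    qed
  qed (use fS fT in auto)
  have sT: "sum g ?T = 0" using s0 eq1 eq2 by simp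
  have allT: "\<forall>w\<in>?T. f w = 0"
  proof (cases M)
    case 0
    have "g [] + g [True] = 0" using sT 0 by (simp add: Tset_def)
    hence "f [] = 0 \<and> f [True] = 0" using 0
      by (simp add: g_def bd_one tc_def Amat_def cm_def m2_eq_iff)
    then show ?thesis using 0 by (simp add: Tset_def)
  next
    case (Suc m)
    have dist: "alt False (2*m+1) \<notin> {alt True (2*m+2), alt False (2*m+2), alt True (2*m+3)}"
       "alt True (2*m+2) \<notin> {alt False (2*m+2), alt True (2*m+3)}"
       "alt False (2*m+2) \<notin> {alt True (2*m+3)}"
      by (simp_all only: alt_eq_iff insert_iff empty_iff) simp_all
    have "g (alt False (2*m+1)) + (g (alt True (2*m+2)) + (g (alt False (2*m+2)) + g (alt True (2*m+3)))) = 0"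
      using sT Suc dist by (simp add: Tset_def)
    hence "f (alt False (2*m+1)) = 0 \<and> f (alt True (2*m+2)) = 0 \<and> f (alt False (2*m+2)) = 0 \<and> f (alt True (2*m+3)) = 0"
      unfolding g_def Suc T_tc_Suc by (simp del: alt.simps add: cm_def m2_eq_iff) (metis mult_zero_left)
    then show ?thesis using Suc by (simp add: Tset_def)
  qed
  have "M \<in> nbw ` ?S" unfolding M_def using fS neS by simp
  then obtain w1 where w1: "w1 \<in> ?S" "nbw w1 = M" by auto
  then obtain c k where "w1 = alt c k" using assms(2) by blast
  hence "w1 \<in> ?T" using nf_T w1 by metis
  thus False using allT w1 by auto
qed

end


lemma nf_or_split: "(\<exists>c k. w = alt c k) \<or> (\<exists>u c v. w = u @ c # c # v)"
proof (induct w)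
  case Nil
  have "[] = alt True 0" by simp
  then show ?case by blast
next
  case (Cons d w)
  then show ?case
  proof
    assume "\<exists>c k. w = alt c k"
    then obtain c k where w: "w = alt c k" by blast
    show ?thesis
    proof (cases k)
      case 0
      have "d # w = alt d 1" using w 0 by simp
      then show ?thesis by blast
    next
      case (Suc k')
      show ?thesis
      proof (cases "d = c")
        case True
        have "d # w = [] @ d # d # alt (\<not> c) k'" using w Suc True by simp
        then show ?thesis by blast
      next
        case False
        have "d # w = alt d (Suc k)" using w Suc False by (cases d) auto
        then show ?thesis by blast
      qed
    qed
  next
    assume "\<exists>u c v. w = u @ c # c # v"
    then obtain u c v where "w = u @ c # c # v" by blast
    hence "d # w = (d # u) @ c # c # v" by simp
    then show ?thesis by blast
  qed
qed

definition mu :: "'k::field falg \<Rightarrow> nat" where "mu f = (\<Sum>w\<in>supp f. 3 ^ length w)"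

context pq
begin

lemma kernel_aux:
  "\<forall>f. f \<in> FA \<longrightarrow> Phi f = 0 \<longrightarrow> mu f = n \<longrightarrow> f \<in> W_ideal p q"
proof (induct n rule: less_induct)
  case (less n)
  show ?case
  proof (intro allI impI)
    fix f :: "'k falg"
    assume fFA: "f \<in> FA" and f0: "Phi f = 0" and mn: "mu f = n"
    have fS: "finite (supp f)" using fFA by (simp add: FA_iff)
    show "f \<in> W_ideal p q"
    proof (cases "\<forall>w. f w \<noteq> 0 \<longrightarrow> (\<exists>c k. w = alt c k)")
      case True
      have "f = (\<lambda>w. 0)" using indep[OF fFA _ f0] True by blast
      then show ?thesis using W_zero by simp
    next
      case False
      then obtain w where fw: "f w \<noteq> 0" and nnf: "\<not> (\<exists>c k. w = alt c k)" by blast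
      then obtain u c v where w: "w = u @ c # c # v" using nf_or_split by blast
      define P where "P = (if c then p else q)"
      have dP: "degree P = 2" and lP: "coeff P 2 = 1" using dp lp dq lq by (auto simp: P_def)
      define D where "D = fa_mult (fa_word u) (fa_mult (fa_poly_gen P c) (fa_word v))"
      have DW: "D \<in> W_ideal p q" unfolding D_def P_def by (rule W_sandwich)
      have DFA: "D \<in> FA" and D0: "Phi D = 0" using ideal_phi[OF DW] by auto
      define f' where "f' = fa_add f (fa_scale (- f w) D)"
      have f'FA: "f' \<in> FA" unfolding f'_def by (simp add: FA_add FA_scale fFA DFA)
      have f'0: "Phi f' = 0" unfolding f'_def using fFA DFA f0 D0 by (simp add: phi_add phi_scale FA_scale)
      have Dval: "D (u @ m @ v) = fa_poly_gen P c m" for m unfolding D_def by (rule fa_sandwich_app)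
      have Dw: "D w = 1"
      proof -
        have "D w = fa_poly_gen P c [c, c]" using Dval[of "[c, c]"] w by simp
        also have "\<dots> = 1" using lP by (simp add: fa_poly_gen_def numeral_2_eq_2)
        finally show ?thesis .
      qed
      have f'w: "f' w = 0" by (simp add: f'_def fa_add_def fa_scale_def Dw)
      have sub: "supp f' \<subseteq> (supp f - {w}) \<union> {u @ v, u @ [c] @ v}"
      proof
        fix x assume x: "x \<in> supp f'"
        hence xw: "x \<noteq> w" using f'w by auto
        show "x \<in> (supp f - {w}) \<union> {u @ v, u @ [c] @ v}"
        proof (cases "f x = 0")
          case False then show ?thesis using xw by auto
        next
          case True
          hence "D x \<noteq> 0" using x by (auto simp: f'_def fa_add_def fa_scale_def)
          then obtain m where xm: "x = u @ m @ v" using fa_sandwich_supp unfolding D_def by blast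
          hence "fa_poly_gen P c m \<noteq> 0" using \<open>D x \<noteq> 0\<close> Dval by simp
          hence "m \<in> {[], [c], [c, c]}" using poly_gen_supp[OF dP, of c] by auto
          then show ?thesis using xm xw w by auto
        qed
      qed
      have fin2: "finite ((supp f - {w}) \<union> {u @ v, u @ [c] @ v})" using fS by simp
      have "mu f' \<le> (\<Sum>x\<in>(supp f - {w}) \<union> {u @ v, u @ [c] @ v}. 3 ^ length x)"
        unfolding mu_def by (rule sum_mono2[OF fin2 sub]) simp
      also have "\<dots> \<le> (\<Sum>x\<in>supp f - {w}. 3 ^ length x) + (\<Sum>x\<in>{u @ v, u @ [c] @ v}. 3 ^ length x)"
      proof -
        have "(\<Sum>x\<in>(supp f - {w}) \<union> {u @ v, u @ [c] @ v}. (3::nat) ^ length x) =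
          (\<Sum>x\<in>supp f - {w}. 3 ^ length x) + (\<Sum>x\<in>{u @ v, u @ [c] @ v}. 3 ^ length x)
           - (\<Sum>x\<in>(supp f - {w}) \<inter> {u @ v, u @ [c] @ v}. 3 ^ length x)"
          by (rule sum_Un_nat) (use fS in auto)
        thus ?thesis by linarith
      qed
      also have "(\<Sum>x\<in>{u @ v, u @ [c] @ v}. (3::nat) ^ length x) = 3 ^ (length u + length v) + 3 ^ (length u + length v + 1)"
        by simp
      also have "(\<Sum>x\<in>supp f - {w}. 3 ^ length x) + ((3::nat) ^ (length u + length v) + 3 ^ (length u + length v + 1))
          < (\<Sum>x\<in>supp f - {w}. 3 ^ length x) + 3 ^ length w"
        using w by simp
      also have "\<dots> = mu f"
        unfolding mu_def using fS fw by (simp add: sum.remove[of "supp f" w] add.commute)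
      finally have lt: "mu f' < n" using mn by simp
      have f'W: "f' \<in> W_ideal p q" using less[OF lt] f'FA f'0 by blast
      have "f = fa_add f' (fa_scale (f w) D)"
        by (rule ext) (simp add: f'_def fa_add_def fa_scale_def)
      then show ?thesis using f'W DW by (metis W_ideal.add W_scale)
    qed
  qed
qed

lemma kernel: "f \<in> FA \<Longrightarrow> Phi f = 0 \<Longrightarrow> f \<in> W_ideal p q"
  using kernel_aux by blast

end

theorem mainTheorem16:
  fixes p q :: "'k::field poly" and x :: "'k falg"
  assumes "degree p = 2" and "lead_coeff p = 1"
    and "degree q = 2" and "lead_coeff q = 1"
    and "x \<in> FA" and "x \<notin> W_ideal p q"
  shows "(\<exists>y\<in>FA. y \<notin> W_ideal p q \<and>
            (fa_mult x y \<in> W_ideal p q \<or> fa_mult y x \<in> W_ideal p q))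
         \<longleftrightarrow> W_norm p q x \<in> W_ideal p q"
proof -
  interpret pq p q using assms(1-4) by unfold_locales
  let ?X = "Phi x"
  have Xnz: "?X \<noteq> 0" using kernel assms(5,6) by blast
  have st: "fa_star p q x \<in> FA" "Phi (fa_star p q x) = adj ?X" using star_phi[OF assms(5)] by auto
  show ?thesis
  proof
    assume "\<exists>y\<in>FA. y \<notin> W_ideal p q \<and> (fa_mult x y \<in> W_ideal p q \<or> fa_mult y x \<in> W_ideal p q)"
    then obtain y where y: "y \<in> FA" "y \<notin> W_ideal p q"
      and or: "fa_mult x y \<in> W_ideal p q \<or> fa_mult y x \<in> W_ideal p q" by blast
    have Ynz: "Phi y \<noteq> 0" using kernel y by blast
    have "det2 ?X = 0"
      using or
    proof
      assume "fa_mult x y \<in> W_ideal p q"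
      hence "?X * Phi y = 0" using ideal_phi phi_mult[OF assms(5) y(1)] by metis
      thus ?thesis using det_zero_right Ynz by blast
    next
      assume "fa_mult y x \<in> W_ideal p q"
      hence "Phi y * ?X = 0" using ideal_phi phi_mult[OF y(1) assms(5)] by metis
      thus ?thesis using det_zero_left Ynz by blast
    qed
    moreover have "Phi (W_norm p q x) = ?X * adj ?X"
      unfolding W_norm_def using phi_mult[OF assms(5) st(1)] st(2) by simp
    ultimately have "Phi (W_norm p q x) = 0" by (simp add: mult_adj)
    moreover have "W_norm p q x \<in> FA" unfolding W_norm_def using FA_mult[OF assms(5) st(1)] .
    ultimately show "W_norm p q x \<in> W_ideal p q" using kernel by blast
  next
    assume N: "W_norm p q x \<in> W_ideal p q"
    have "fa_star p q x \<notin> W_ideal p q"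
    proof
      assume "fa_star p q x \<in> W_ideal p q"
      hence "adj ?X = 0" using ideal_phi st(2) by metis
      thus False using Xnz adj_0_iff by blast
    qed
    thus "\<exists>y\<in>FA. y \<notin> W_ideal p q \<and> (fa_mult x y \<in> W_ideal p q \<or> fa_mult y x \<in> W_ideal p q)"
      using st(1) N unfolding W_norm_def by blast
  qed
qed

end
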